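(* Let $c\in\mathcal{C}$ and suppose there exist $0\le\theta_1<\theta_2<2\pi$ with $c(\theta_1)=c(\theta_2)$. Then there exist $\theta,\tilde\theta\in[\theta_1,\theta_2]$ (at which $c'$ exists and is nonzero) such that $|\mathrm{angle}(c'(\theta))-\mathrm{angle}(c'(\tilde\theta))|\ge\pi$, with strict inequality unless $c([\theta_1,\theta_2])$ is a segment.
   Context: The plane is identified with $\mathbb{C}$, and $\mathbb{S}^1$ with $[0,2\pi)$. $\mathcal{C}$ denotes the set of Lipschitz maps $c:\mathbb{S}^1\to\mathbb{C}$ with $c'(\theta)\neq 0$ for a.e. $\theta$. For $z\in\mathbb{C}\setminus\{0\}$, $\mathrm{angle}(z)\in[0,2\pi)$ denotes the argument of $z$. *)

theory Defs
  imports "HOL-Analysis.Analysis"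
begin

text \<open>Argument of a nonzero complex number, normalised to [0, 2pi).
  (Isabelle's Arg takes values in (-pi, pi].)\<close>
definition angle :: "complex \<Rightarrow> real" where
  "angle z = (if 0 \<le> Arg z then Arg z else Arg z + 2 * pi)"

text \<open>The class C: Lipschitz maps from the circle S^1 = [0,2pi) to the plane,
  represented as 2pi-periodic maps real => complex, whose derivative exists
  and is nonzero almost everywhere.\<close>
definition curve_class :: "(real \<Rightarrow> complex) \<Rightarrow> bool" where
  "curve_class c \<longleftrightarrow>
     (\<forall>x. c (x + 2 * pi) = c x) \<and>
     (\<exists>L. L-lipschitz_on UNIV c) \<and>
     (AE t in lborel. t \<in> {0..<2*pi} \<longrightarrow>
        c differentiable (at t) \<and> vector_derivative c (at t) \<noteq> 0)"

end

theory Submission imports Defs begin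

lemma mono_pos_aux:
  fixes g :: "real \<Rightarrow> real"
  assumes ab: "a \<le> b" and cont: "continuous_on {a..b} g" and negl: "negligible (g ` N)"
    and der: "\<And>t. t \<in> {a..b} - N \<Longrightarrow> \<exists>d>0. (g has_real_derivative d) (at t)"
  shows "g a \<le> g b"
proof (rule ccontr)
  assume "\<not> g a \<le> g b"
  hence lt: "g b < g a" by simp
  have "\<not> negligible {g b<..<g a}"
    using lt negligible_interval(2)[of "g b" "g a"] by (simp add: box_real)
  then obtain y where y: "y \<in> {g b<..<g a}" "y \<notin> g ` N"
    by (metis negl negligible_subset subsetI)
  define S where "S = {a..b} \<inter> g -` {y..}"
  have clS: "closed S" unfolding S_def
    by (intro continuous_closed_preimage cont) auto
  have aS: "a \<in> S" using y ab by (auto simp: S_def)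
  have bdd: "bdd_above S" unfolding S_def by (auto intro: bdd_aboveI[of _ b])
  define s where "s = Sup S"
  have sS: "s \<in> S" unfolding s_def using closed_contains_Sup[OF _ bdd clS] aS by blast
  have upper: "\<And>t. t \<in> S \<Longrightarrow> t \<le> s" unfolding s_def using bdd by (simp add: cSup_upper)
  have sab: "a \<le> s" "s \<le> b" using sS by (auto simp: S_def)
  have gs: "y \<le> g s" using sS by (auto simp: S_def)
  obtain x where x: "s \<le> x" "x \<le> b" "g x = y"
  proof -
    have "continuous_on {s..b} g" using sab by (intro continuous_on_subset[OF cont]) auto
    moreover have "g b \<le> y" using y by simp
    ultimately show ?thesis using IVT2'[of g b y s] gs sab that by blast
  qed
  have "x \<in> S" using x sab by (auto simp: S_def)
  hence "x = s" using upper x by force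
  hence gsy: "g s = y" using x by simp
  hence sb: "s < b" using y sab by (smt (verit) greaterThanLessThan_iff)
  have "s \<notin> N" using gsy y by blast
  then obtain d where "d > 0" "(g has_real_derivative d) (at s)" using der[of s] sab by auto
  then obtain \<delta> where \<delta>: "\<delta> > 0" "\<And>h. h > 0 \<Longrightarrow> h < \<delta> \<Longrightarrow> g s < g (s + h)"
    using DERIV_pos_inc_right by blast
  define h where "h = min (\<delta>/2) ((b - s)/2)"
  have h: "h > 0" "h < \<delta>" "s + h \<le> b" using \<delta>(1) sb unfolding h_def by (auto simp: min_def field_simps)
  have "g s < g (s + h)" using \<delta> h by blast
  hence "s + h \<in> S" using gsy h sab by (auto simp: S_def)
  thus False using upper h by fastforce
qed

lemma mono_nonneg_aux:
  fixes g :: "real \<Rightarrow> real"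
  assumes ab: "a \<le> b" and lip: "B-lipschitz_on UNIV g" and negl: "negligible N"
    and der: "\<And>t. t \<in> {a..b} - N \<Longrightarrow> \<exists>d\<ge>0. (g has_real_derivative d) (at t)"
  shows "g a \<le> g b"
proof (rule ccontr)
  assume "\<not> g a \<le> g b"
  hence lt: "g b < g a" by simp
  define e where "e = (g a - g b) / (b - a + 1)"
  have e: "e > 0" using lt ab by (simp add: e_def)
  have eb: "e * (b - a) < g a - g b"
  proof -
    have "e * (b - a) < e * (b - a + 1)" using e by simp
    also have "\<dots> = g a - g b" using ab by (simp add: e_def)
    finally show ?thesis .
  qed
  define ge where "ge = (\<lambda>t. g t + e * t)"
  have B: "B \<ge> 0" using lip lipschitz_on_nonneg by blast
  have lipe: "\<And>x y. \<bar>ge y - ge x\<bar> \<le> (B + e) * \<bar>y - x\<bar>"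
  proof -
    fix x y
    have "\<bar>g y - g x\<bar> \<le> B * \<bar>y - x\<bar>" using lipschitz_onD[OF lip, of y x] by (simp add: dist_real_def)
    have "\<bar>ge y - ge x\<bar> = \<bar>(g y - g x) + e * (y - x)\<bar>" by (simp add: ge_def algebra_simps)
    also have "\<dots> \<le> \<bar>g y - g x\<bar> + \<bar>e * (y - x)\<bar>" by (rule abs_triangle_ineq)
    also have "\<bar>e * (y - x)\<bar> = e * \<bar>y - x\<bar>" using e by (simp add: abs_mult)
    finally show "\<bar>ge y - ge x\<bar> \<le> (B + e) * \<bar>y - x\<bar>" using \<open>\<bar>g y - g x\<bar> \<le> B * \<bar>y - x\<bar>\<close>
      by (simp add: algebra_simps)
  qed
  have cont: "continuous_on {a..b} ge"
    unfolding ge_def using lipschitz_on_continuous_on[OF lip]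
    by (intro continuous_intros) (auto intro: continuous_on_subset)
  have "negligible (ge ` N)"
    by (rule negligible_locally_Lipschitz_image[OF _ negl]) (use lipe in \<open>auto intro!: exI[of _ UNIV] exI[of _ "B + e"]\<close>)
  have "ge a \<le> ge b"
  proof (rule mono_pos_aux[OF ab cont \<open>negligible (ge ` N)\<close>])
    fix t assume "t \<in> {a..b} - N"
    then obtain d where "d \<ge> 0" "(g has_real_derivative d) (at t)" using der by blast
    hence "(ge has_real_derivative d + e) (at t)" unfolding ge_def
      by (auto intro!: derivative_eq_intros)
    thus "\<exists>d>0. (ge has_real_derivative d) (at t)" using \<open>d \<ge> 0\<close> e
      by (intro exI[of _ "d + e"]) auto
  qed
  thus False using eb by (simp add: ge_def algebra_simps)
qed


lemma exists_pos_deriv_aux: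
  fixes g d :: "real \<Rightarrow> real"
  assumes ab: "a < b" and lip: "B-lipschitz_on UNIV g" and eq: "g a = g b" and negl: "negligible N"
    and der: "\<And>t. t \<in> {a<..<b} - N \<Longrightarrow> (g has_real_derivative d t) (at t) \<and> d t \<noteq> 0"
  shows "\<exists>t\<in>{a<..<b} - N. d t > 0"
proof (rule ccontr)
  assume "\<not> ?thesis"
  hence neg: "\<And>t. t \<in> {a<..<b} - N \<Longrightarrow> d t < 0" using der by force
  have negl2: "negligible (N \<union> {a, b})" using negl by auto
  have lip2: "B-lipschitz_on UNIV (\<lambda>t. - g t)" using lip by (simp add: lipschitz_on_minus)
  have mono: "- g x \<le> - g y" if "a \<le> x" "x \<le> y" "y \<le> b" for x y
  proof (rule mono_nonneg_aux[OF \<open>x \<le> y\<close> lip2 negl2])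
    fix t assume "t \<in> {x..y} - (N \<union> {a, b})"
    hence t: "t \<in> {a<..<b} - N" using that by auto
    have "((\<lambda>t. - g t) has_real_derivative - d t) (at t)"
      using der[OF t] by (auto intro!: derivative_eq_intros)
    thus "\<exists>d\<ge>0. ((\<lambda>t. - g t) has_real_derivative d) (at t)"
      using neg[OF t] by (intro exI[of _ "- d t"]) auto
  qed
  have const: "g x = g a" if "a \<le> x" "x \<le> b" for x
    using mono[of a x] mono[of x b] that eq ab by force
  have "\<not> negligible {a<..<b}"
    using ab negligible_interval(2)[of a b] by (simp add: box_real)
  moreover have "{a<..<b} - N \<noteq> {} \<or> {a<..<b} \<subseteq> N" by blast
  ultimately obtain t where t: "t \<in> {a<..<b} - N"
    using negligible_subset[OF negl] by blast
  have "d t = 0"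
  proof (rule DERIV_local_const[of g "d t" t "min (t - a) (b - t)"])
    show "(g has_real_derivative d t) (at t)" using der[OF t] by blast
    show "0 < min (t - a) (b - t)" using t by auto
    show "\<forall>y. \<bar>t - y\<bar> < min (t - a) (b - t) \<longrightarrow> g t = g y"
    proof (intro allI impI)
      fix y assume "\<bar>t - y\<bar> < min (t - a) (b - t)"
      hence "a \<le> y" "y \<le> b" by (auto simp: abs_if split: if_splits)
      thus "g t = g y" using const[of y] const[of t] t by auto
    qed
  qed
  thus False using der[OF t] by blast
qed

lemma proj_lip:
  fixes c :: "real \<Rightarrow> complex"
  assumes lc: "L-lipschitz_on UNIV c" and w: "cmod w = 1"
  shows "L-lipschitz_on UNIV (\<lambda>t. Im (c t * cnj w))" "L-lipschitz_on UNIV (\<lambda>t. Re (c t * cnj w))"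
proof -
  have L: "L \<ge> 0" using assms lipschitz_on_nonneg by blast
  have cl: "cmod (c y - c x) \<le> L * \<bar>y - x\<bar>" for x y
    using lipschitz_onD[OF lc, of y x] by (simp add: dist_norm dist_real_def)
  have "\<bar>Im (c y * cnj w) - Im (c x * cnj w)\<bar> \<le> L * \<bar>y - x\<bar>" for x y
  proof -
    have "\<bar>Im (c y * cnj w) - Im (c x * cnj w)\<bar> = \<bar>Im ((c y - c x) * cnj w)\<bar>" by (simp add: algebra_simps)
    also have "\<dots> \<le> cmod ((c y - c x) * cnj w)" by (rule abs_Im_le_cmod)
    also have "\<dots> = cmod (c y - c x)" using w by (simp add: norm_mult)
    finally show ?thesis using cl[of y x] by linarith
  qed
  thus "L-lipschitz_on UNIV (\<lambda>t. Im (c t * cnj w))"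
    by (intro lipschitz_onI) (auto simp: dist_real_def L)
  have "\<bar>Re (c y * cnj w) - Re (c x * cnj w)\<bar> \<le> L * \<bar>y - x\<bar>" for x y
  proof -
    have "\<bar>Re (c y * cnj w) - Re (c x * cnj w)\<bar> = \<bar>Re ((c y - c x) * cnj w)\<bar>" by (simp add: algebra_simps)
    also have "\<dots> \<le> cmod ((c y - c x) * cnj w)" by (rule abs_Re_le_cmod)
    also have "\<dots> = cmod (c y - c x)" using w by (simp add: norm_mult)
    finally show ?thesis using cl[of y x] by linarith
  qed
  thus "L-lipschitz_on UNIV (\<lambda>t. Re (c t * cnj w))"
    by (intro lipschitz_onI) (auto simp: dist_real_def L)
qed

lemma proj_deriv:
  fixes c :: "real \<Rightarrow> complex"
  assumes "c differentiable (at t)"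
  shows "((\<lambda>t. Im (c t * cnj w)) has_real_derivative Im (vector_derivative c (at t) * cnj w)) (at t)"
    "((\<lambda>t. Re (c t * cnj w)) has_real_derivative Re (vector_derivative c (at t) * cnj w)) (at t)"
proof -
  have "(c has_vector_derivative vector_derivative c (at t)) (at t)"
    using assms vector_derivative_works by blast
  hence "((\<lambda>t. c t * cnj w) has_vector_derivative vector_derivative c (at t) * cnj w) (at t)"
    by (rule has_vector_derivative_mult_left)
  thus "((\<lambda>t. Im (c t * cnj w)) has_real_derivative Im (vector_derivative c (at t) * cnj w)) (at t)"
    "((\<lambda>t. Re (c t * cnj w)) has_real_derivative Re (vector_derivative c (at t) * cnj w)) (at t)"
    by (auto simp: has_vector_derivative_complex_iff)
qed

lemma angle_nonneg: "angle z \<ge> 0" and angle_less: "angle z < 2 * pi"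
  unfolding angle_def using Arg_bounded[of z] by auto

lemma angle_mult_pos: "r > 0 \<Longrightarrow> angle (of_real r * z) = angle z"
  unfolding angle_def by (simp add: Arg_times_of_real)

lemma angle_minus: "z \<noteq> 0 \<Longrightarrow> \<bar>angle z - angle (- z)\<bar> = pi"
proof -
  assume z: "z \<noteq> 0"
  have "-pi < Arg z" "Arg z \<le> pi" using Arg_bounded[of z] by auto
  moreover have "Arg (-z) = (if Arg z \<le> 0 then Arg z + pi else Arg z - pi)" using Arg_minus[OF z] .
  ultimately show ?thesis unfolding angle_def by (smt (verit))
qed

lemma cis_angle: "z \<noteq> 0 \<Longrightarrow> cis (angle z) = sgn z"
proof -
  assume z: "z \<noteq> 0"
  have "cis (Arg z + 2 * pi) = cis (Arg z)" by (simp add: cis_mult[symmetric] flip: cis_mult)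
  thus ?thesis unfolding angle_def using cis_Arg[OF z] by auto
qed

theorem lemma3p1:
  fixes c :: "real \<Rightarrow> complex" and t1 t2 :: real
  assumes "curve_class c"
    and "0 \<le> t1" and "t1 < t2" and "t2 < 2 * pi"
    and "c t1 = c t2"
  shows "\<exists>t t'. t \<in> {t1..t2} \<and> t' \<in> {t1..t2} \<and>
           c differentiable (at t) \<and> vector_derivative c (at t) \<noteq> 0 \<and>
           c differentiable (at t') \<and> vector_derivative c (at t') \<noteq> 0 \<and>
           \<bar>angle (vector_derivative c (at t)) - angle (vector_derivative c (at t'))\<bar> \<ge> pi \<and>
           ((\<nexists>a b. c ` {t1..t2} = closed_segment a b) \<longrightarrow>
             \<bar>angle (vector_derivative c (at t)) - angle (vector_derivative c (at t'))\<bar> > pi)"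
proof -
  let ?P = "\<lambda>t. c differentiable (at t) \<and> vector_derivative c (at t) \<noteq> 0"
  let ?d = "\<lambda>t. vector_derivative c (at t)"
  obtain L where lip: "L-lipschitz_on UNIV c" using assms(1) unfolding curve_class_def by blast
  have ae: "AE t in lborel. t \<in> {0..<2*pi} \<longrightarrow> ?P t" using assms(1) unfolding curve_class_def by blast
  define N0 where "N0 = {t1..t2} - {t. ?P t}"
  have negN0: "negligible N0"
  proof -
    obtain N where N: "{x \<in> space lborel. \<not> (x \<in> {0..<2*pi} \<longrightarrow> ?P x)} \<subseteq> N"
      "emeasure lborel N = 0" "N \<in> sets lborel"
      using AE_E[OF ae] by blast
    have "N \<in> null_sets lborel" using N by (simp add: null_setsI)
    hence "negligible N" by (simp add: negligible_iff_null_sets null_sets_completionI)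
    moreover have "N0 \<subseteq> N"
    proof
      fix x assume "x \<in> N0"
      hence "x \<in> {x \<in> space lborel. \<not> (x \<in> {0..<2*pi} \<longrightarrow> ?P x)}"
        using assms(2,4) by (auto simp: N0_def)
      thus "x \<in> N" using N(1) by blast
    qed
    ultimately show ?thesis by (rule negligible_subset)
  qed
  define D where "D = {t1..t2} - N0"
  have D: "\<And>t. t \<in> D \<longleftrightarrow> t \<in> {t1..t2} \<and> ?P t" by (auto simp: D_def N0_def)
  have "\<not> negligible {t1<..<t2}"
    using assms(3) negligible_interval(2)[of t1 t2] by (simp add: box_real)
  moreover have "{t1<..<t2} - N0 \<noteq> {} \<or> {t1<..<t2} \<subseteq> N0" by blast
  ultimately obtain t0 where t0: "t0 \<in> {t1<..<t2} - N0"
    using negligible_subset[OF negN0] by blast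
  have t0D: "t0 \<in> D" using t0 by (auto simp: D_def)
  show ?thesis
  proof (cases "\<exists>t\<in>D. \<exists>t'\<in>D. \<bar>angle (?d t) - angle (?d t')\<bar> > pi")
    case True
    then obtain t t' where "t \<in> D" "t' \<in> D" "\<bar>angle (?d t) - angle (?d t')\<bar> > pi" by blast
    thus ?thesis using D[of t] D[of t'] by (intro exI[of _ t] exI[of _ t']) auto
  next
    case False
    hence le: "\<And>t t'. t \<in> D \<Longrightarrow> t' \<in> D \<Longrightarrow> \<bar>angle (?d t) - angle (?d t')\<bar> \<le> pi" by force
    define A where "A = (\<lambda>t. angle (?d t)) ` D"
    define m where "m = Inf A"
    have Ane: "A \<noteq> {}" using t0D by (auto simp: A_def)
    have Abdd: "bdd_below A" unfolding A_def by (rule bdd_belowI[of _ 0]) (auto simp: angle_nonneg)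
    have hm: "m \<le> angle (?d t) \<and> angle (?d t) \<le> m + pi" if "t \<in> D" for t
    proof
      show "m \<le> angle (?d t)" unfolding m_def using that Abdd by (auto simp: A_def intro: cInf_lower)
      have "angle (?d t) - pi \<le> Inf A"
        using Ane by (rule cInf_greatest) (use le[OF that] in \<open>force simp: A_def abs_le_iff\<close>)
      thus "angle (?d t) \<le> m + pi" by (simp add: m_def)
    qed
    define w where "w = cis m"
    have w1: "cmod w = 1" by (simp add: w_def)
    have ww: "cnj w * w = 1" by (simp add: w_def cis_cnj cis_mult)
    have imnn: "Im (?d t * cnj w) \<ge> 0" if "t \<in> D" for t
    proof -
      have nz: "?d t \<noteq> 0" using D that by blast
      have "?d t = of_real (cmod (?d t)) * sgn (?d t)"
        using nz by (simp add: scaleR_conv_of_real[symmetric] sgn_div_norm)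
      also have "\<dots> = of_real (cmod (?d t)) * cis (angle (?d t))" using cis_angle[OF nz] by simp
      finally have e: "?d t = of_real (cmod (?d t)) * cis (angle (?d t))" .
      have "?d t * cnj w = of_real (cmod (?d t)) * cis (angle (?d t)) * cis (- m)"
        by (subst e) (simp add: w_def cis_cnj)
      also have "\<dots> = of_real (cmod (?d t)) * cis (angle (?d t) - m)"
        by (simp add: mult.assoc cis_mult)
      finally have "?d t * cnj w = of_real (cmod (?d t)) * cis (angle (?d t) - m)" .
      hence "Im (?d t * cnj w) = cmod (?d t) * sin (angle (?d t) - m)" by simp
      moreover have "sin (angle (?d t) - m) \<ge> 0" using hm[OF that] by (intro sin_ge_zero) auto
      ultimately show ?thesis by simp
    qed
    define f where "f = (\<lambda>t. Im (c t * cnj w))"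
    define h where "h = (\<lambda>t. Re (c t * cnj w))"
    have flip: "L-lipschitz_on UNIV f" "L-lipschitz_on UNIV h"
      using proj_lip[OF lip w1] by (simp_all add: f_def h_def)
    have fder: "(f has_real_derivative Im (?d t * cnj w)) (at t)" if "c differentiable (at t)" for t
      using proj_deriv(1)[OF that] by (simp add: f_def)
    have hder: "(h has_real_derivative Re (?d t * cnj w)) (at t)" if "c differentiable (at t)" for t
      using proj_deriv(2)[OF that] by (simp add: h_def)
    have fmono: "f a \<le> f b" if "t1 \<le> a" "a \<le> b" "b \<le> t2" for a b
    proof (rule mono_nonneg_aux[OF \<open>a \<le> b\<close> flip(1) negN0])
      fix t assume "t \<in> {a..b} - N0"
      hence "t \<in> D" using that by (auto simp: D_def)
      thus "\<exists>d\<ge>0. (f has_real_derivative d) (at t)" using fder imnn D by blast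
    qed
    have feq: "f t = f t1" if "t \<in> {t1..t2}" for t
      using fmono[of t1 t] fmono[of t t2] that assms(5) by (auto simp: f_def)
    have im0: "Im (?d t * cnj w) = 0" if "t \<in> {t1<..<t2} - N0" for t
    proof (rule DERIV_local_const[of f _ t "min (t - t1) (t2 - t)"])
      have "t \<in> D" using that by (auto simp: D_def)
      thus "(f has_real_derivative Im (?d t * cnj w)) (at t)" using fder D by blast
      show "0 < min (t - t1) (t2 - t)" using that by auto
      show "\<forall>y. \<bar>t - y\<bar> < min (t - t1) (t2 - t) \<longrightarrow> f t = f y"
      proof (intro allI impI)
        fix y assume "\<bar>t - y\<bar> < min (t - t1) (t2 - t)"
        hence "t1 \<le> y" "y \<le> t2" by (auto simp: abs_if split: if_splits)
        thus "f t = f y" using feq[of y] feq[of t] that by auto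
      qed
    qed
    have dform: "?d t = of_real (Re (?d t * cnj w)) * w \<and> Re (?d t * cnj w) \<noteq> 0"
      if "t \<in> {t1<..<t2} - N0" for t
    proof -
      have "?d t * cnj w = of_real (Re (?d t * cnj w))" using im0[OF that] by (simp add: complex_eq_iff)
      hence "?d t * cnj w * w = of_real (Re (?d t * cnj w)) * w" by simp
      hence e: "?d t = of_real (Re (?d t * cnj w)) * w" using ww by (simp add: mult.assoc)
      have "t \<in> D" using that by (auto simp: D_def)
      hence "?d t \<noteq> 0" using D by blast
      hence "Re (?d t * cnj w) \<noteq> 0" using e by (metis mult_zero_left of_real_0)
      thus ?thesis using e by blast
    qed
    have heq: "h t1 = h t2" using assms(5) by (simp add: h_def)
    obtain tp where tp: "tp \<in> {t1<..<t2} - N0" "Re (?d tp * cnj w) > 0"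
    proof -
      have "\<exists>t\<in>{t1<..<t2} - N0. Re (?d t * cnj w) > 0"
      proof (rule exists_pos_deriv_aux[OF assms(3) flip(2) heq negN0])
        fix t assume t: "t \<in> {t1<..<t2} - N0"
        hence "t \<in> D" by (auto simp: D_def)
        thus "(h has_real_derivative Re (?d t * cnj w)) (at t) \<and> Re (?d t * cnj w) \<noteq> 0"
          using hder D dform[OF t] by blast
      qed
      thus ?thesis using that by blast
    qed
    obtain tn where tn: "tn \<in> {t1<..<t2} - N0" "- Re (?d tn * cnj w) > 0"
    proof -
      have "\<exists>t\<in>{t1<..<t2} - N0. - Re (?d t * cnj w) > 0"
      proof (rule exists_pos_deriv_aux[OF assms(3) lipschitz_on_minus[OF flip(2)]])
        show "- h t1 = - h t2" using heq by simp
        show "negligible N0" by (rule negN0)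
        fix t assume t: "t \<in> {t1<..<t2} - N0"
        hence "t \<in> D" by (auto simp: D_def)
        hence "(h has_real_derivative Re (?d t * cnj w)) (at t)" using hder D by blast
        hence "((\<lambda>x. - h x) has_real_derivative - Re (?d t * cnj w)) (at t)"
          by (auto intro!: derivative_eq_intros)
        thus "((\<lambda>x. - h x) has_real_derivative - Re (?d t * cnj w)) (at t) \<and> - Re (?d t * cnj w) \<noteq> 0"
          using dform[OF t] by simp
      qed
      thus ?thesis using that by blast
    qed
    have angp: "angle (?d tp) = angle w"
      using dform[OF tp(1)] tp(2) angle_mult_pos by metis
    have angn: "angle (?d tn) = angle (- w)"
    proof -
      have "\<And>r::real. of_real r * w = of_real (- r) * (- w)" by simp
      hence "?d tn = of_real (- Re (?d tn * cnj w)) * (- w)" using dform[OF tn(1)] by metis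
      thus ?thesis using tn(2) angle_mult_pos by metis
    qed
    have wnz: "w \<noteq> 0" using w1 by auto
    have angeq: "\<bar>angle (?d tp) - angle (?d tn)\<bar> = pi"
      using angp angn angle_minus[OF wnz] by simp
    have seg: "\<exists>a b. c ` {t1..t2} = closed_segment a b"
    proof -
      have cform: "c t = c t1 + of_real (h t - h t1) * w" if "t \<in> {t1..t2}" for t
      proof -
        have "(c t - c t1) * cnj w = of_real (h t - h t1)"
          using feq[OF that] by (simp add: complex_eq_iff f_def h_def algebra_simps)
        hence "(c t - c t1) * cnj w * w = of_real (h t - h t1) * w" by simp
        moreover have "(c t - c t1) * cnj w * w = c t - c t1" using ww by (simp only: mult.assoc) simp
        ultimately have "c t - c t1 = of_real (h t - h t1) * w" by simp
        thus ?thesis by (metis add.commute diff_add_cancel)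
      qed
      have hc: "continuous_on {t1..t2} h"
        using lipschitz_on_continuous_on[OF flip(2)] continuous_on_subset by blast
      obtain p q where pq: "h ` {t1..t2} = {p..q}" "p \<le> q"
        using continuous_image_closed_interval[OF _ hc] assms(3) by force
      define \<phi> where "\<phi> = (\<lambda>s::real. (c t1 - of_real (h t1) * w) + s *\<^sub>R w)"
      have "c ` {t1..t2} = \<phi> ` (h ` {t1..t2})"
        unfolding image_image using cform
        by (auto simp: \<phi>_def scaleR_conv_of_real algebra_simps intro!: image_cong)
      also have "\<dots> = \<phi> ` closed_segment p q" using pq by (simp add: closed_segment_eq_real_ivl1)
      also have "\<dots> = closed_segment (\<phi> p) (\<phi> q)"
      proof -
        have lin: "linear (\<lambda>s::real. s *\<^sub>R w)" by (simp add: linear_scaleR_left)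
        have "\<phi> ` closed_segment p q = (+) (c t1 - of_real (h t1) * w) ` ((\<lambda>s. s *\<^sub>R w) ` closed_segment p q)"
          by (simp add: \<phi>_def image_image)
        also have "\<dots> = closed_segment (\<phi> p) (\<phi> q)"
          by (simp add: closed_segment_linear_image[OF lin, symmetric] closed_segment_translation[symmetric] \<phi>_def)
        finally show ?thesis .
      qed
      finally show ?thesis by blast
    qed
    have "tp \<in> D" "tn \<in> D" using tp tn by (auto simp: D_def)
    thus ?thesis using angeq seg D[of tp] D[of tn]
      by (intro exI[of _ tp] exI[of _ tn]) auto
  qed
qed

end
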